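(* Let $m\ge1$, let $k_1,k_2\ge0$ be integers and $r_1,r_2>0$ with $r_1^2+r_2^2=1$. Let $F_1:\mathbb{R}^{m+1}\to\mathbb{R}^{n_1+1}$ and $F_2:\mathbb{R}^{m+1}\to\mathbb{R}^{n_2+1}$ be forms of degrees $k_1$, $k_2$ (all components homogeneous polynomials of that degree) with $|F_1(\bar x)|^2=r_1^2|\bar x|^{2k_1}$ and $|F_2(\bar x)|^2=r_2^2|\bar x|^{2k_2}$ for all $\bar x$, restricting to $\varphi_1:\mathbb{S}^m\to\mathbb{S}^{n_1}(r_1)$, $\varphi_2:\mathbb{S}^m\to\mathbb{S}^{n_2}(r_2)$. Let $F=(F_1,F_2):\mathbb{R}^{m+1}\to\mathbb{R}^{n_1+n_2+2}$, $\Phi=(\Phi_1,\Phi_2)$ its restriction to $\mathbb{S}^m$, and $\varphi=\iota\circ(\varphi_1,\varphi_2):\mathbb{S}^m\to\mathbb{S}^{n_1+n_2+1}$, where $\iota$ is the canonical inclusion of $\mathbb{S}^{n_1}(r_1)\times\mathbb{S}^{n_2}(r_2)$ into $\mathbb{S}^{n_1+n_2+1}$. Then, at every point of $\mathbb{S}^m$, $$\tau(\varphi)=-\Delta^0F+\Big(\big(|d^0F|^2-k_1^2r_1^2-k_2^2r_2^2+k_1(1-m-k_1)\big)\Phi_1,\ \big(|d^0F|^2-k_1^2r_1^2-k_2^2r_2^2+k_2(1-m-k_2)\big)\Phi_2\Big).$$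
   Context: $\mathbb{S}^m$ is the unit sphere in $\mathbb{R}^{m+1}$, $\mathbb{S}^n(r)$ the sphere of radius $r$ centred at $0$. The tension field $\tau(\varphi)=\operatorname{trace}\nabla d\varphi$ is regarded as an $\mathbb{R}^{n_1+n_2+2}$-valued function on $\mathbb{S}^m$ via the inclusion $\mathbb{S}^{n_1+n_2+1}\subset\mathbb{R}^{n_1+n_2+2}$. Operators on $\mathbb{R}^{m+1}$ (evaluated at points of $\mathbb{S}^m$): $\Delta^0F=-\sum_i\partial^2F/\partial(x^i)^2$ componentwise; $|d^0F|^2=\sum_{i=1}^{m+1}|\partial F/\partial x^i|^2$. *)

theory Defs
  imports "HOL-Analysis.Analysis"
begin

text \<open>Points of R^(d+1) are modelled as functions nat => real, of which only
the coordinates 0..d are relevant.\<close>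

definition sqnorm :: "nat \<Rightarrow> (nat \<Rightarrow> real) \<Rightarrow> real" where
  "sqnorm d v = (\<Sum>i\<le>d. (v i)\<^sup>2)"

definition multi_idx :: "nat \<Rightarrow> nat \<Rightarrow> (nat \<Rightarrow> nat) set" where
  "multi_idx m k = {\<alpha>. (\<forall>i>m. \<alpha> i = 0) \<and> (\<Sum>i\<le>m. \<alpha> i) = k}"

definition hom_poly_fun :: "nat \<Rightarrow> nat \<Rightarrow> ((nat \<Rightarrow> real) \<Rightarrow> real) \<Rightarrow> bool" where
  "hom_poly_fun m k p \<longleftrightarrow>
     (\<exists>c :: (nat \<Rightarrow> nat) \<Rightarrow> real. \<forall>x. p x = (\<Sum>\<alpha>\<in>multi_idx m k. c \<alpha> * (\<Prod>i\<le>m. x i ^ \<alpha> i)))"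

definition is_form :: "nat \<Rightarrow> nat \<Rightarrow> nat \<Rightarrow> ((nat \<Rightarrow> real) \<Rightarrow> nat \<Rightarrow> real) \<Rightarrow> bool" where
  "is_form m n k F \<longleftrightarrow> (\<forall>j\<le>n. hom_poly_fun m k (\<lambda>x. F x j))"

definition sphere_pts :: "nat \<Rightarrow> (nat \<Rightarrow> real) set" where
  "sphere_pts m = {x. (\<forall>i>m. x i = 0) \<and> sqnorm m x = 1}"

definition partial :: "nat \<Rightarrow> ((nat \<Rightarrow> real) \<Rightarrow> real) \<Rightarrow> (nat \<Rightarrow> real) \<Rightarrow> real" where
  "partial i f x = deriv (\<lambda>t. f (x(i := t))) (x i)"

definition flat_laplacian :: "nat \<Rightarrow> ((nat \<Rightarrow> real) \<Rightarrow> real) \<Rightarrow> (nat \<Rightarrow> real) \<Rightarrow> real" where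
  "flat_laplacian m f x = - (\<Sum>i\<le>m. partial i (partial i f) x)"

definition flat_energy :: "nat \<Rightarrow> nat \<Rightarrow> ((nat \<Rightarrow> real) \<Rightarrow> nat \<Rightarrow> real) \<Rightarrow> (nat \<Rightarrow> real) \<Rightarrow> real" where
  "flat_energy m N F x = (\<Sum>i\<le>m. \<Sum>j\<le>N. (partial i (\<lambda>y. F y j) x)\<^sup>2)"

text \<open>Geodesic of S^m through x with initial velocity v (v tangent at x).\<close>
definition geod :: "nat \<Rightarrow> (nat \<Rightarrow> real) \<Rightarrow> (nat \<Rightarrow> real) \<Rightarrow> real \<Rightarrow> (nat \<Rightarrow> real)" where
  "geod m x v t = (\<lambda>i. cos (t * sqrt (sqnorm m v)) * x i
      + (if sqnorm m v = 0 then 0 else sin (t * sqrt (sqnorm m v)) / sqrt (sqnorm m v)) * v i)"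

definition hess_sph :: "nat \<Rightarrow> ((nat \<Rightarrow> real) \<Rightarrow> real) \<Rightarrow> (nat \<Rightarrow> real) \<Rightarrow> (nat \<Rightarrow> real) \<Rightarrow> real" where
  "hess_sph m f x v = deriv (deriv (\<lambda>t. f (geod m x v t))) 0"

text \<open>Orthogonal projection of the standard basis vector e_j onto T_x S^m.\<close>
definition tproj :: "(nat \<Rightarrow> real) \<Rightarrow> nat \<Rightarrow> (nat \<Rightarrow> real)" where
  "tproj x j = (\<lambda>i. (if i = j then 1 else 0) - x j * x i)"

text \<open>Laplace-Beltrami operator (trace of the Hessian) on S^m:
  sum_j Hess f (P e_j, P e_j) with P the orthogonal projection onto T_x S^m.\<close>
definition lb_sph :: "nat \<Rightarrow> ((nat \<Rightarrow> real) \<Rightarrow> real) \<Rightarrow> (nat \<Rightarrow> real) \<Rightarrow> real" where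
  "lb_sph m f x = (\<Sum>j\<le>m. hess_sph m f x (tproj x j))"

text \<open>Tension field of phi : S^m -> S^N (unit sphere in R^(N+1)), as an
  R^(N+1)-valued function: tangential part of the componentwise Laplace-Beltrami.\<close>
definition tension :: "nat \<Rightarrow> nat \<Rightarrow> ((nat \<Rightarrow> real) \<Rightarrow> nat \<Rightarrow> real) \<Rightarrow> (nat \<Rightarrow> real) \<Rightarrow> nat \<Rightarrow> real" where
  "tension m N \<phi> x = (\<lambda>j. lb_sph m (\<lambda>y. \<phi> y j) x
      - (\<Sum>l\<le>N. lb_sph m (\<lambda>y. \<phi> y l) x * \<phi> x l) * \<phi> x j)"

definition concat_map :: "nat \<Rightarrow> ((nat \<Rightarrow> real) \<Rightarrow> nat \<Rightarrow> real) \<Rightarrow> ((nat \<Rightarrow> real) \<Rightarrow> nat \<Rightarrow> real)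
     \<Rightarrow> (nat \<Rightarrow> real) \<Rightarrow> nat \<Rightarrow> real" where
  "concat_map n1 F1 F2 = (\<lambda>x j. if j \<le> n1 then F1 x j else F2 x (j - Suc n1))"

end

theory Submission imports Defs begin

datatype pexp = Cst real | Vr nat | Ad pexp pexp | Ml pexp pexp

fun ev :: "pexp \<Rightarrow> (nat \<Rightarrow> real) \<Rightarrow> real" where
  "ev (Cst c) y = c"
| "ev (Vr j) y = y j"
| "ev (Ad a b) y = ev a y + ev b y"
| "ev (Ml a b) y = ev a y * ev b y"

fun dr :: "nat \<Rightarrow> pexp \<Rightarrow> pexp" where
  "dr l (Cst c) = Cst 0"
| "dr l (Vr j) = Cst (if l = j then 1 else 0)"
| "dr l (Ad a b) = Ad (dr l a) (dr l b)"
| "dr l (Ml a b) = Ad (Ml (dr l a) b) (Ml a (dr l b))"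

fun okv :: "nat \<Rightarrow> pexp \<Rightarrow> bool" where
  "okv m (Cst c) = True"
| "okv m (Vr j) = (j \<le> m)"
| "okv m (Ad a b) = (okv m a \<and> okv m b)"
| "okv m (Ml a b) = (okv m a \<and> okv m b)"

lemma okv_dr: "okv m e \<Longrightarrow> okv m (dr l e)"
  by (induction e) auto

lemma chain:
  assumes "okv m e" "\<forall>l\<le>m. ((\<lambda>s. c s l) has_real_derivative c' l) (at t)"
  shows "((\<lambda>s. ev e (c s)) has_real_derivative (\<Sum>l\<le>m. ev (dr l e) (c t) * c' l)) (at t)"
  using assms(1)
proof (induction e)
  case (Cst x)
  then show ?case by simp
next
  case (Vr j)
  then have "((\<lambda>s. c s j) has_real_derivative c' j) (at t)" using assms(2) by simp
  moreover have "(\<Sum>l\<le>m. ev (dr l (Vr j)) (c t) * c' l) = c' j" proof -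
    have "\<And>l. ev (dr l (Vr j)) (c t) * c' l = (if l = j then c' j else 0)" by simp
    then show ?thesis using Vr by simp
  qed
  ultimately show ?case by simp
next
  case (Ad a b)
  then show ?case by (auto intro!: derivative_eq_intros simp: sum.distrib distrib_right)
next
  case (Ml a b)
  then have "((\<lambda>s. ev a (c s) * ev b (c s)) has_real_derivative
     (\<Sum>l\<le>m. ev (dr l a) (c t) * c' l) * ev b (c t) + ev a (c t) * (\<Sum>l\<le>m. ev (dr l b) (c t) * c' l)) (at t)"
    by (auto intro!: derivative_eq_intros simp: algebra_simps)
  moreover have "(\<Sum>l\<le>m. ev (dr l a) (c t) * c' l) * ev b (c t) + ev a (c t) * (\<Sum>l\<le>m. ev (dr l b) (c t) * c' l)
     = (\<Sum>l\<le>m. ev (dr l (Ml a b)) (c t) * c' l)"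
    by (simp add: sum_distrib_left sum_distrib_right sum.distrib algebra_simps)
  ultimately show ?case by simp
qed

lemma partial_ev:
  assumes "okv m e" "i \<le> m"
  shows "partial i (ev e) = ev (dr i e)"
proof
  fix x :: "nat \<Rightarrow> real"
  have d: "\<forall>l\<le>m. ((\<lambda>s. (x(i:=s)) l) has_real_derivative (if l = i then 1 else 0)) (at (x i))"
    by (auto intro!: derivative_eq_intros)
  have "((\<lambda>s. ev e (x(i:=s))) has_real_derivative
      (\<Sum>l\<le>m. ev (dr l e) (x(i:=x i)) * (if l = i then 1 else 0))) (at (x i))"
    by (rule chain[OF assms(1) d])
  moreover have "(\<Sum>l\<le>m. ev (dr l e) (x(i:=x i)) * (if l = i then 1 else 0)) = ev (dr i e) x"
  proof -
    have "\<And>l. ev (dr l e) (x(i:=x i)) * (if l = i then 1 else 0) = (if l = i then ev (dr i e) x else 0)" by simp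
    then show ?thesis using assms(2) by simp
  qed
  ultimately show "partial i (ev e) x = ev (dr i e) x"
    unfolding partial_def by (simp add: DERIV_imp_deriv)
qed

definition homog :: "nat \<Rightarrow> pexp \<Rightarrow> bool" where
  "homog k e \<longleftrightarrow> (\<forall>a y. ev e (\<lambda>i. a * y i) = a ^ k * ev e y)"

lemma euler_gen:
  assumes "okv m e" "homog k e"
  shows "(\<Sum>l\<le>m. ev (dr l e) (\<lambda>i. s * y i) * y l) = real k * s ^ (k - 1) * ev e y"
proof -
  have d: "\<forall>l\<le>m. ((\<lambda>s. s * y l) has_real_derivative y l) (at s)"
    by (auto intro!: derivative_eq_intros)
  have 1: "((\<lambda>s. ev e (\<lambda>i. s * y i)) has_real_derivative
      (\<Sum>l\<le>m. ev (dr l e) (\<lambda>i. s * y i) * y l)) (at s)"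
    using chain[OF assms(1), of "\<lambda>s i. s * y i" "\<lambda>l. y l" s] d by simp
  have eq: "(\<lambda>s. ev e (\<lambda>i. s * y i)) = (\<lambda>s. s ^ k * ev e y)"
    using assms(2) unfolding homog_def by simp
  have 2: "((\<lambda>s. s ^ k * ev e y) has_real_derivative real k * s ^ (k - 1) * ev e y) (at s)"
    by (auto intro!: derivative_eq_intros)
  show ?thesis using DERIV_unique[OF 1[unfolded eq] 2] .
qed

lemma euler1:
  assumes "okv m e" "homog k e"
  shows "(\<Sum>l\<le>m. ev (dr l e) y * y l) = real k * ev e y"
  using euler_gen[OF assms, of 1 y] by simp

lemma euler2:
  assumes "okv m e" "homog k e"
  shows "(\<Sum>l\<le>m. (\<Sum>i\<le>m. ev (dr i (dr l e)) y * y i) * y l) = real k * (real k - 1) * ev e y"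
proof -
  have d: "\<forall>l\<le>m. ((\<lambda>s. s * y l) has_real_derivative y l) (at 1)"
    by (auto intro!: derivative_eq_intros)
  have 1: "((\<lambda>s. \<Sum>l\<le>m. ev (dr l e) (\<lambda>i. s * y i) * y l) has_real_derivative
      (\<Sum>l\<le>m. (\<Sum>i\<le>m. ev (dr i (dr l e)) (\<lambda>i. 1 * y i) * y i) * y l)) (at 1)"
  proof (rule DERIV_sum)
    fix l assume "l \<in> {..m}"
    have "((\<lambda>s. ev (dr l e) (\<lambda>i. s * y i)) has_real_derivative
      (\<Sum>i\<le>m. ev (dr i (dr l e)) (\<lambda>i. 1 * y i) * y i)) (at 1)"
      using chain[OF okv_dr[OF assms(1)], of "\<lambda>s i. s * y i" "\<lambda>l. y l" 1] d by simp
    then show "((\<lambda>s. ev (dr l e) (\<lambda>i. s * y i) * y l) has_real_derivative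
      (\<Sum>i\<le>m. ev (dr i (dr l e)) (\<lambda>i. 1 * y i) * y i) * y l) (at 1)"
      by (auto intro!: derivative_eq_intros)
  qed
  have eq: "(\<lambda>s. \<Sum>l\<le>m. ev (dr l e) (\<lambda>i. s * y i) * y l) = (\<lambda>s. real k * s ^ (k - 1) * ev e y)"
    using euler_gen[OF assms] by simp
  have 2: "((\<lambda>s. real k * s ^ (k - 1) * ev e y) has_real_derivative real k * (real (k - 1) * 1 ^ (k - 1 - 1)) * ev e y) (at 1)"
    by (auto intro!: derivative_eq_intros)
  have "(\<Sum>l\<le>m. (\<Sum>i\<le>m. ev (dr i (dr l e)) y * y i) * y l) = real k * (real (k - 1)) * ev e y"
    using DERIV_unique[OF 1[unfolded eq] 2] by simp
  then show ?thesis by (cases k) auto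
qed

definition g1 :: "nat \<Rightarrow> (nat \<Rightarrow> real) \<Rightarrow> (nat \<Rightarrow> real) \<Rightarrow> nat \<Rightarrow> real \<Rightarrow> real" where
  "g1 m x v l t = - sqrt (sqnorm m v) * sin (t * sqrt (sqnorm m v)) * x l + cos (t * sqrt (sqnorm m v)) * v l"

definition g2 :: "nat \<Rightarrow> (nat \<Rightarrow> real) \<Rightarrow> (nat \<Rightarrow> real) \<Rightarrow> nat \<Rightarrow> real \<Rightarrow> real" where
  "g2 m x v l t = - sqrt (sqnorm m v) * sqrt (sqnorm m v) * cos (t * sqrt (sqnorm m v)) * x l
     - sqrt (sqnorm m v) * sin (t * sqrt (sqnorm m v)) * v l"

lemma sqnorm_nonneg: "sqnorm m v \<ge> 0"
  unfolding sqnorm_def by (simp add: sum_nonneg)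

lemma sqnorm_zero: "sqnorm m v = 0 \<Longrightarrow> l \<le> m \<Longrightarrow> v l = 0"
  unfolding sqnorm_def by (simp add: sum_nonneg_eq_0_iff)

lemma cs_deriv:
  fixes s :: real assumes "s > 0"
  shows "((\<lambda>t. cos (t * s) * a + sin (t * s) / s * b) has_real_derivative - s * sin (t * s) * a + cos (t * s) * b) (at t)"
  using assms by (auto intro!: derivative_eq_intros simp: field_simps)

lemma geod_d1:
  assumes "l \<le> m"
  shows "((\<lambda>t. geod m x v t l) has_real_derivative g1 m x v l t) (at t)"
proof (cases "sqnorm m v = 0")
  case True
  then have "v l = 0" using sqnorm_zero assms by blast
  then show ?thesis using True unfolding geod_def g1_def by simp
next
  case False
  then have p: "sqrt (sqnorm m v) > 0" using sqnorm_nonneg[of m v] by simp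
  show ?thesis unfolding geod_def g1_def using False cs_deriv[OF p, of "x l" "v l" t] by simp
qed

lemma geod_d2:
  shows "((\<lambda>t. g1 m x v l t) has_real_derivative g2 m x v l t) (at t)"
  unfolding g1_def g2_def
  by (auto intro!: derivative_eq_intros simp: field_simps)

lemma geod0: "geod m x v 0 = x"
  unfolding geod_def by auto

lemma g1_0: "g1 m x v l 0 = v l" unfolding g1_def by simp
lemma g2_0: "g2 m x v l 0 = - sqnorm m v * x l" unfolding g2_def using sqnorm_nonneg[of m v] by simp

lemma hess_ev:
  assumes "okv m e"
  shows "hess_sph m (ev e) x v = (\<Sum>l\<le>m. (\<Sum>i\<le>m. ev (dr i (dr l e)) x * v i) * v l)
      - sqnorm m v * (\<Sum>l\<le>m. ev (dr l e) x * x l)"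
proof -
  have d1: "\<forall>l\<le>m. ((\<lambda>t. geod m x v t l) has_real_derivative g1 m x v l t) (at t)" for t
    using geod_d1 by blast
  have "deriv (\<lambda>t. ev e (geod m x v t)) = (\<lambda>t. \<Sum>l\<le>m. ev (dr l e) (geod m x v t) * g1 m x v l t)"
  proof
    fix t show "deriv (\<lambda>t. ev e (geod m x v t)) t = (\<Sum>l\<le>m. ev (dr l e) (geod m x v t) * g1 m x v l t)"
      using chain[OF assms, of "geod m x v" "\<lambda>l. g1 m x v l t" t] d1[of t]
      by (simp add: DERIV_imp_deriv)
  qed
  moreover have "((\<lambda>t. \<Sum>l\<le>m. ev (dr l e) (geod m x v t) * g1 m x v l t) has_real_derivative
      (\<Sum>l\<le>m. (\<Sum>i\<le>m. ev (dr i (dr l e)) (geod m x v 0) * g1 m x v i 0) * g1 m x v l 0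
          + ev (dr l e) (geod m x v 0) * g2 m x v l 0)) (at 0)"
  proof (rule DERIV_sum)
    fix l assume "l \<in> {..m}"
    have "((\<lambda>t. ev (dr l e) (geod m x v t)) has_real_derivative
      (\<Sum>i\<le>m. ev (dr i (dr l e)) (geod m x v 0) * g1 m x v i 0)) (at 0)"
      using chain[OF okv_dr[OF assms], of "geod m x v" "\<lambda>i. g1 m x v i 0" 0] d1[of 0] by simp
    then show "((\<lambda>t. ev (dr l e) (geod m x v t) * g1 m x v l t) has_real_derivative
      (\<Sum>i\<le>m. ev (dr i (dr l e)) (geod m x v 0) * g1 m x v i 0) * g1 m x v l 0
          + ev (dr l e) (geod m x v 0) * g2 m x v l 0) (at 0)"
      using geod_d2[of m x v l 0] by (auto intro!: derivative_eq_intros)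
  qed
  ultimately have "hess_sph m (ev e) x v = (\<Sum>l\<le>m. (\<Sum>i\<le>m. ev (dr i (dr l e)) (geod m x v 0) * g1 m x v i 0) * g1 m x v l 0
          + ev (dr l e) (geod m x v 0) * g2 m x v l 0)"
    unfolding hess_sph_def by (simp add: DERIV_imp_deriv)
  also have "\<dots> = (\<Sum>l\<le>m. (\<Sum>i\<le>m. ev (dr i (dr l e)) x * v i) * v l)
      - sqnorm m v * (\<Sum>l\<le>m. ev (dr l e) x * x l)"
    by (simp add: geod0 g1_0 g2_0 sum.distrib sum_distrib_left algebra_simps sum_negf sum_subtractf)
  finally show ?thesis .
qed

lemma tproj_P1:
  assumes "sqnorm m x = 1" "i \<le> m" "l \<le> m"
  shows "(\<Sum>j\<le>m. tproj x j i * tproj x j l) = (if i = l then 1 else 0) - x i * x l"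
proof -
  have pw: "tproj x j i * tproj x j l = (if i = j \<and> l = j then 1 else 0) - (if j = i then x i * x l else 0)
     - (if j = l then x l * x i else 0) + (x j)\<^sup>2 * (x i * x l)" for j
    unfolding tproj_def by (auto simp: algebra_simps power2_eq_square)
  have s1: "(\<Sum>j\<le>m. (if i = j \<and> l = j then 1 else 0)) = (if i = l then 1 else (0::real))"
  proof (cases "i = l")
    case True then show ?thesis using assms(2) by simp
  next
    case False then have "\<And>j. \<not> (i = j \<and> l = j)" by auto
    then show ?thesis using False by (auto intro!: sum.neutral)
  qed
  have "(\<Sum>j\<le>m. tproj x j i * tproj x j l) = (\<Sum>j\<le>m. (if i = j \<and> l = j then 1 else 0))
     - (\<Sum>j\<le>m. (if j = i then x i * x l else 0)) - (\<Sum>j\<le>m. (if j = l then x l * x i else 0))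
     + (\<Sum>j\<le>m. (x j)\<^sup>2) * (x i * x l)"
    unfolding pw by (simp only: sum.distrib sum_subtractf sum_distrib_right)
  also have "\<dots> = (if i = l then 1 else 0) - x i * x l"
    using assms s1 unfolding sqnorm_def by simp
  finally show ?thesis .
qed

lemma tproj_P2:
  assumes "sqnorm m x = 1"
  shows "(\<Sum>j\<le>m. sqnorm m (tproj x j)) = real m"
proof -
  have "(\<Sum>j\<le>m. sqnorm m (tproj x j)) = (\<Sum>i\<le>m. \<Sum>j\<le>m. tproj x j i * tproj x j i)"
    unfolding sqnorm_def power2_eq_square by (rule sum.swap)
  also have "\<dots> = (\<Sum>i\<le>m. 1 - (x i)\<^sup>2)"
    using tproj_P1[OF assms] by (simp add: power2_eq_square)
  also have "\<dots> = real (Suc m) - 1"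
    using assms unfolding sqnorm_def by (simp add: sum_subtractf)
  finally show ?thesis by simp
qed

lemma lb_ev:
  assumes "okv m e" "homog k e" "x \<in> sphere_pts m"
  shows "lb_sph m (ev e) x = (\<Sum>i\<le>m. ev (dr i (dr i e)) x) - real k * (real k - 1) * ev e x - real m * real k * ev e x"
proof -
  have x1: "sqnorm m x = 1" using assms(3) unfolding sphere_pts_def by simp
  define D where "D i l = ev (dr i (dr l e)) x" for i l
  have "lb_sph m (ev e) x = (\<Sum>j\<le>m. (\<Sum>l\<le>m. (\<Sum>i\<le>m. D i l * tproj x j i) * tproj x j l)
      - sqnorm m (tproj x j) * (real k * ev e x))"
    unfolding lb_sph_def D_def using hess_ev[OF assms(1)] euler1[OF assms(1,2)] by simp
  also have "\<dots> = (\<Sum>j\<le>m. (\<Sum>l\<le>m. (\<Sum>i\<le>m. D i l * tproj x j i) * tproj x j l))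
      - real m * (real k * ev e x)"
    using tproj_P2[OF x1] by (simp add: sum_subtractf sum_distrib_right[symmetric])
  also have "(\<Sum>j\<le>m. (\<Sum>l\<le>m. (\<Sum>i\<le>m. D i l * tproj x j i) * tproj x j l))
     = (\<Sum>l\<le>m. \<Sum>i\<le>m. D i l * (\<Sum>j\<le>m. tproj x j i * tproj x j l))"
  proof -
    have "(\<Sum>j\<le>m. (\<Sum>l\<le>m. (\<Sum>i\<le>m. D i l * tproj x j i) * tproj x j l))
       = (\<Sum>j\<le>m. \<Sum>l\<le>m. \<Sum>i\<le>m. D i l * (tproj x j i * tproj x j l))"
      by (simp add: sum_distrib_right mult.assoc)
    also have "\<dots> = (\<Sum>l\<le>m. \<Sum>j\<le>m. \<Sum>i\<le>m. D i l * (tproj x j i * tproj x j l))"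
      by (rule sum.swap)
    also have "\<dots> = (\<Sum>l\<le>m. \<Sum>i\<le>m. \<Sum>j\<le>m. D i l * (tproj x j i * tproj x j l))"
      by (rule sum.cong[OF refl], rule sum.swap)
    also have "\<dots> = (\<Sum>l\<le>m. \<Sum>i\<le>m. D i l * (\<Sum>j\<le>m. tproj x j i * tproj x j l))"
      by (simp add: sum_distrib_left)
    finally show ?thesis .
  qed
  also have "\<dots> = (\<Sum>l\<le>m. \<Sum>i\<le>m. D i l * ((if i = l then 1 else 0) - x i * x l))"
    using tproj_P1[OF x1] by simp
  also have "\<dots> = (\<Sum>l\<le>m. D l l) - (\<Sum>l\<le>m. (\<Sum>i\<le>m. D i l * x i) * x l)"
  proof -
    have pw: "D i l * ((if i = l then 1 else 0) - x i * x l) = (if i = l then D l l else 0) - D i l * x i * x l" for i l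
      by (simp add: algebra_simps)
    have "\<forall>l\<in>{..m}. (\<Sum>i\<le>m. D i l * ((if i = l then 1 else 0) - x i * x l)) = D l l - (\<Sum>i\<le>m. D i l * x i) * x l"
      unfolding pw by (simp add: sum_subtractf sum_distrib_right)
    then show ?thesis by (simp add: sum_subtractf)
  qed
  also have "(\<Sum>l\<le>m. (\<Sum>i\<le>m. D i l * x i) * x l) = real k * (real k - 1) * ev e x"
    unfolding D_def by (rule euler2[OF assms(1,2)])
  finally show ?thesis unfolding D_def by (simp add: algebra_simps)
qed

lemma geod_sphere:
  assumes x1: "sqnorm m x = 1" and xv: "(\<Sum>i\<le>m. x i * v i) = 0"
  shows "sqnorm m (geod m x v t) = 1"
proof (cases "sqnorm m v = 0")
  case True
  then have "\<And>i. geod m x v t i = x i" unfolding geod_def by simp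
  then show ?thesis using x1 unfolding sqnorm_def by simp
next
  case False
  define S where "S = sqnorm m v"
  have S0: "S > 0" using False sqnorm_nonneg[of m v] unfolding S_def by simp
  define C where "C = cos (t * sqrt S)"
  define N where "N = sin (t * sqrt S) / sqrt S"
  have g: "geod m x v t = (\<lambda>i. C * x i + N * v i)" unfolding geod_def C_def N_def S_def using False by simp
  have "sqnorm m (geod m x v t) = C\<^sup>2 * (\<Sum>i\<le>m. (x i)\<^sup>2) + 2 * C * N * (\<Sum>i\<le>m. x i * v i) + N\<^sup>2 * (\<Sum>i\<le>m. (v i)\<^sup>2)"
    unfolding g sqnorm_def by (simp add: power2_sum sum.distrib sum_distrib_left algebra_simps power_mult_distrib)
  also have "\<dots> = C\<^sup>2 + N\<^sup>2 * S" using x1 xv unfolding sqnorm_def S_def by simp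
  also have "N\<^sup>2 * S = (sin (t * sqrt S))\<^sup>2" unfolding N_def using S0 by (simp add: power_divide)
  finally show ?thesis unfolding C_def by simp
qed

lemma tproj_tangent:
  assumes "sqnorm m x = 1" "j \<le> m"
  shows "(\<Sum>i\<le>m. x i * tproj x j i) = 0"
proof -
  have pw: "x i * tproj x j i = (if i = j then x j else 0) - x j * (x i)\<^sup>2" for i
    unfolding tproj_def by (simp add: algebra_simps power2_eq_square)
  have "(\<Sum>i\<le>m. x i * tproj x j i) = (\<Sum>i\<le>m. (if i = j then x j else 0)) - x j * (\<Sum>i\<le>m. (x i)\<^sup>2)"
    unfolding pw by (simp add: sum_subtractf sum_distrib_left)
  then show ?thesis using assms unfolding sqnorm_def by simp
qed

fun sumU :: "(nat \<Rightarrow> pexp) \<Rightarrow> nat \<Rightarrow> pexp" where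
  "sumU g 0 = g 0"
| "sumU g (Suc n) = Ad (sumU g n) (g (Suc n))"

lemma ev_sumU: "ev (sumU g n) y = (\<Sum>j\<le>n. ev (g j) y)"
  by (induction n) auto

lemma dr_sumU: "dr i (sumU g n) = sumU (\<lambda>j. dr i (g j)) n"
  by (induction n) auto

lemma okv_sumU: "\<forall>j\<le>n. okv m (g j) \<Longrightarrow> okv m (sumU g n)"
  by (induction n) auto

lemma deriv_const_fun: "deriv (\<lambda>t. c::real) = (\<lambda>t. 0)"
  by (rule ext, rule DERIV_imp_deriv, rule DERIV_const)

lemma block:
  fixes g :: "nat \<Rightarrow> pexp" and n :: nat
  assumes okg: "\<forall>j\<le>n. okv m (g j)" and hg: "\<forall>j\<le>n. homog K (g j)"
    and sq: "\<forall>y. (\<Sum>j\<le>n. (ev (g j) y)\<^sup>2) = c * (sqnorm m y) ^ K"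
    and xs: "x \<in> sphere_pts m"
  shows "(\<Sum>j\<le>n. ev (g j) x * (\<Sum>i\<le>m. ev (dr i (dr i (g j))) x) + (\<Sum>i\<le>m. (ev (dr i (g j)) x)\<^sup>2))
     = real K * (2 * real K + real m - 1) * c"
proof -
  have x1: "sqnorm m x = 1" using xs unfolding sphere_pts_def by simp
  define eQ where "eQ = sumU (\<lambda>j. Ml (g j) (g j)) n"
  have evQ: "ev eQ y = c * (sqnorm m y) ^ K" for y
    using sq unfolding eQ_def ev_sumU by (simp add: power2_eq_square)
  have okQ: "okv m eQ" unfolding eQ_def using okg by (intro okv_sumU) auto
  have hQ: "homog (2 * K) eQ"
    unfolding homog_def eQ_def ev_sumU
  proof (intro allI)
    fix a :: real and y
    have "(\<Sum>j\<le>n. ev (Ml (g j) (g j)) (\<lambda>i. a * y i)) = (\<Sum>j\<le>n. a ^ (2 * K) * ev (Ml (g j) (g j)) y)"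
    proof (rule sum.cong[OF refl])
      fix j assume "j \<in> {..n}"
      then have "ev (g j) (\<lambda>i. a * y i) = a ^ K * ev (g j) y" using hg unfolding homog_def by auto
      then show "ev (Ml (g j) (g j)) (\<lambda>i. a * y i) = a ^ (2 * K) * ev (Ml (g j) (g j)) y"
        by (simp add: power_mult algebra_simps power2_eq_square)
    qed
    then show "(\<Sum>j\<le>n. ev (Ml (g j) (g j)) (\<lambda>i. a * y i)) = a ^ (2 * K) * (\<Sum>j\<le>n. ev (Ml (g j) (g j)) y)"
      by (simp add: sum_distrib_left)
  qed
  have lb0: "lb_sph m (ev eQ) x = 0"
    unfolding lb_sph_def
  proof (rule sum.neutral, intro ballI)
    fix j assume "j \<in> {..m}"
    then have "(\<Sum>i\<le>m. x i * tproj x j i) = 0" using tproj_tangent[OF x1] by simp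
    then have "\<And>t. ev eQ (geod m x (tproj x j) t) = c" using geod_sphere[OF x1] evQ by simp
    then show "hess_sph m (ev eQ) x (tproj x j) = 0" unfolding hess_sph_def by (simp add: deriv_const_fun)
  qed
  define T where "T = (\<Sum>j\<le>n. ev (g j) x * (\<Sum>i\<le>m. ev (dr i (dr i (g j))) x) + (\<Sum>i\<le>m. (ev (dr i (g j)) x)\<^sup>2))"
  have LQ: "(\<Sum>i\<le>m. ev (dr i (dr i eQ)) x) = 2 * T"
  proof -
    have "(\<Sum>i\<le>m. ev (dr i (dr i eQ)) x) = (\<Sum>i\<le>m. \<Sum>j\<le>n. 2 * (ev (g j) x * ev (dr i (dr i (g j))) x + (ev (dr i (g j)) x)\<^sup>2))"
      unfolding eQ_def dr_sumU ev_sumU by (simp add: algebra_simps power2_eq_square)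
    also have "\<dots> = (\<Sum>j\<le>n. \<Sum>i\<le>m. 2 * (ev (g j) x * ev (dr i (dr i (g j))) x + (ev (dr i (g j)) x)\<^sup>2))"
      by (rule sum.swap)
    also have "\<dots> = 2 * T" unfolding T_def
      by (simp add: sum_distrib_left sum.distrib)
    finally show ?thesis .
  qed
  have "0 = 2 * T - real (2 * K) * (real (2 * K) - 1) * c - real m * real (2 * K) * c"
    using lb_ev[OF okQ hQ xs] lb0 LQ evQ[of x] x1 by simp
  then show ?thesis unfolding T_def[symmetric] by (simp add: algebra_simps)
qed

definition expr :: "nat \<Rightarrow> ((nat \<Rightarrow> real) \<Rightarrow> real) \<Rightarrow> bool" where
  "expr m f \<longleftrightarrow> (\<exists>e. okv m e \<and> ev e = f)"

lemma expr_const: "expr m (\<lambda>x. c)"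
  unfolding expr_def by (rule exI[of _ "Cst c"]) auto

lemma expr_var: "i \<le> m \<Longrightarrow> expr m (\<lambda>x. x i)"
  unfolding expr_def by (rule exI[of _ "Vr i"]) auto

lemma expr_add: assumes "expr m f" "expr m g" shows "expr m (\<lambda>x. f x + g x)"
proof -
  obtain e1 where "okv m e1" "ev e1 = f" using assms(1) unfolding expr_def by blast
  moreover obtain e2 where "okv m e2" "ev e2 = g" using assms(2) unfolding expr_def by blast
  ultimately show ?thesis unfolding expr_def by (intro exI[of _ "Ad e1 e2"]) auto
qed

lemma expr_mult: assumes "expr m f" "expr m g" shows "expr m (\<lambda>x. f x * g x)"
proof -
  obtain e1 where "okv m e1" "ev e1 = f" using assms(1) unfolding expr_def by blast
  moreover obtain e2 where "okv m e2" "ev e2 = g" using assms(2) unfolding expr_def by blast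
  ultimately show ?thesis unfolding expr_def by (intro exI[of _ "Ml e1 e2"]) auto
qed

lemma expr_pow: "expr m f \<Longrightarrow> expr m (\<lambda>x. f x ^ n)"
  by (induction n) (auto intro: expr_const expr_mult)

lemma expr_sum_fin: "finite A \<Longrightarrow> (\<forall>a\<in>A. expr m (g a)) \<Longrightarrow> expr m (\<lambda>x. \<Sum>a\<in>A. g a x)"
  by (induction A rule: finite_induct) (auto intro: expr_const expr_add)

lemma expr_sum: "(\<forall>a\<in>A. expr m (g a)) \<Longrightarrow> expr m (\<lambda>x. \<Sum>a\<in>A. g a x)"
  by (cases "finite A") (auto intro: expr_sum_fin expr_const)

lemma expr_prod_fin: "finite A \<Longrightarrow> (\<forall>a\<in>A. expr m (g a)) \<Longrightarrow> expr m (\<lambda>x. \<Prod>a\<in>A. g a x)"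
  by (induction A rule: finite_induct) (auto intro: expr_const expr_mult)

lemma expr_prod: "(\<forall>a\<in>A. expr m (g a)) \<Longrightarrow> expr m (\<lambda>x. \<Prod>a\<in>A. g a x)"
  by (cases "finite A") (auto intro: expr_prod_fin expr_const)

lemma hom_poly_expr:
  assumes "hom_poly_fun m k p"
  shows "\<exists>e. okv m e \<and> ev e = p \<and> homog k e"
proof -
  obtain c where c: "\<forall>x. p x = (\<Sum>\<alpha>\<in>multi_idx m k. c \<alpha> * (\<Prod>i\<le>m. x i ^ \<alpha> i))"
    using assms unfolding hom_poly_fun_def by blast
  have pe: "p = (\<lambda>x. \<Sum>\<alpha>\<in>multi_idx m k. c \<alpha> * (\<Prod>i\<le>m. x i ^ \<alpha> i))" using c by auto
  have "expr m p" unfolding pe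
    by (intro expr_sum ballI expr_mult expr_const expr_prod expr_pow expr_var) auto
  then obtain e where e: "okv m e" "ev e = p" unfolding expr_def by blast
  have "homog k e" unfolding homog_def e(2)
  proof (intro allI)
    fix a :: real and y :: "nat \<Rightarrow> real"
    have "p (\<lambda>i. a * y i) = (\<Sum>\<alpha>\<in>multi_idx m k. a ^ k * (c \<alpha> * (\<Prod>i\<le>m. y i ^ \<alpha> i)))"
    proof (simp only: pe, rule sum.cong[OF refl])
      fix \<alpha> assume "\<alpha> \<in> multi_idx m k"
      then have sk: "(\<Sum>i\<le>m. \<alpha> i) = k" unfolding multi_idx_def by simp
      have "(\<Prod>i\<le>m. (a * y i) ^ \<alpha> i) = (\<Prod>i\<le>m. a ^ \<alpha> i) * (\<Prod>i\<le>m. y i ^ \<alpha> i)"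
        by (simp add: power_mult_distrib prod.distrib)
      also have "(\<Prod>i\<le>m. a ^ \<alpha> i) = a ^ k" using sk by (simp add: power_sum[symmetric])
      finally show "c \<alpha> * (\<Prod>i\<le>m. (a * y i) ^ \<alpha> i) = a ^ k * (c \<alpha> * (\<Prod>i\<le>m. y i ^ \<alpha> i))"
        by simp
    qed
    also have "\<dots> = a ^ k * p y" using c by (simp add: sum_distrib_left)
    finally show "p (\<lambda>i. a * y i) = a ^ k * p y" .
  qed
  then show ?thesis using e by blast
qed

lemma split_sum:
  fixes h :: "nat \<Rightarrow> real"
  shows "(\<Sum>l\<le>n1 + n2 + 1. h l) = (\<Sum>l\<le>n1. h l) + (\<Sum>l\<le>n2. h (Suc n1 + l))"
  by (induction n2) (simp_all add: algebra_simps)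

lemma form_exprs:
  assumes "is_form m n k F"
  obtains E where "\<forall>j\<le>n. okv m (E j) \<and> ev (E j) = (\<lambda>x. F x j) \<and> homog k (E j)"
proof -
  have "\<forall>j. \<exists>e. j \<le> n \<longrightarrow> okv m e \<and> ev e = (\<lambda>x. F x j) \<and> homog k e"
    using assms hom_poly_expr unfolding is_form_def by blast
  then obtain E where "\<forall>j. j \<le> n \<longrightarrow> okv m (E j) \<and> ev (E j) = (\<lambda>x. F x j) \<and> homog k (E j)"
    by metis
  then show ?thesis using that by blast
qed

theorem mainTheorem3:
  fixes m n1 n2 k1 k2 :: nat and r1 r2 :: real
    and F1 F2 :: "(nat \<Rightarrow> real) \<Rightarrow> nat \<Rightarrow> real"
  assumes "m \<ge> 1" and "r1 > 0" and "r2 > 0" and "r1\<^sup>2 + r2\<^sup>2 = 1"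
    and "is_form m n1 k1 F1" and "is_form m n2 k2 F2"
    and "\<forall>x. sqnorm n1 (F1 x) = r1\<^sup>2 * (sqnorm m x) ^ k1"
    and "\<forall>x. sqnorm n2 (F2 x) = r2\<^sup>2 * (sqnorm m x) ^ k2"
  shows "\<forall>x\<in>sphere_pts m. \<forall>j\<le>n1 + n2 + 1.
    tension m (n1 + n2 + 1) (concat_map n1 F1 F2) x j =
      - flat_laplacian m (\<lambda>y. concat_map n1 F1 F2 y j) x
      + (if j \<le> n1
         then (flat_energy m (n1 + n2 + 1) (concat_map n1 F1 F2) x
                 - (real k1)\<^sup>2 * r1\<^sup>2 - (real k2)\<^sup>2 * r2\<^sup>2
                 + real k1 * (1 - real m - real k1)) * F1 x j
         else (flat_energy m (n1 + n2 + 1) (concat_map n1 F1 F2) x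
                 - (real k1)\<^sup>2 * r1\<^sup>2 - (real k2)\<^sup>2 * r2\<^sup>2
                 + real k2 * (1 - real m - real k2)) * F2 x (j - Suc n1))"
proof (intro ballI allI impI)
  fix x j
  assume xs: "x \<in> sphere_pts m" and jN: "j \<le> n1 + n2 + 1"
  have x1: "sqnorm m x = 1" using xs unfolding sphere_pts_def by simp
  obtain E1 where E1: "\<forall>j\<le>n1. okv m (E1 j) \<and> ev (E1 j) = (\<lambda>x. F1 x j) \<and> homog k1 (E1 j)"
    using form_exprs[OF assms(5)] by blast
  obtain E2 where E2: "\<forall>j\<le>n2. okv m (E2 j) \<and> ev (E2 j) = (\<lambda>x. F2 x j) \<and> homog k2 (E2 j)"
    using form_exprs[OF assms(6)] by blast
  define N where "N = n1 + n2 + 1"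
  define \<phi> where "\<phi> = concat_map n1 F1 F2"
  define e where "e l = (if l \<le> n1 then E1 l else E2 (l - Suc n1))" for l
  define K where "K l = (if l \<le> n1 then k1 else k2)" for l
  have eprops: "okv m (e l) \<and> homog (K l) (e l) \<and> (\<lambda>y. \<phi> y l) = ev (e l)" if "l \<le> N" for l
  proof (cases "l \<le> n1")
    case True then show ?thesis using E1 unfolding e_def K_def \<phi>_def concat_map_def by auto
  next
    case False
    then have "l - Suc n1 \<le> n2" using that unfolding N_def by auto
    then show ?thesis using E2 False unfolding e_def K_def \<phi>_def concat_map_def by auto
  qed
  define f where "f l = \<phi> x l" for l
  define L where "L l = (\<Sum>i\<le>m. ev (dr i (dr i (e l))) x)" for l
  define G where "G l = (\<Sum>i\<le>m. (ev (dr i (e l)) x)\<^sup>2)" for l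
  have fe: "f l = ev (e l) x" if "l \<le> N" for l
    using eprops[OF that] unfolding f_def by metis
  have lbl: "lb_sph m (\<lambda>y. \<phi> y l) x = L l - (real (K l) * (real (K l) - 1) + real m * real (K l)) * f l"
    if "l \<le> N" for l
    using eprops[OF that] lb_ev[of m "e l" "K l" x] xs fe[OF that] unfolding L_def by (simp add: algebra_simps)
  have lap: "flat_laplacian m (\<lambda>y. \<phi> y l) x = - L l" if "l \<le> N" for l
  proof -
    have "\<forall>i\<in>{..m}. partial i (partial i (\<lambda>y. \<phi> y l)) x = ev (dr i (dr i (e l))) x"
    proof
      fix i assume "i \<in> {..m}" then have im: "i \<le> m" by simp
      have ok: "okv m (e l)" and fe: "(\<lambda>y. \<phi> y l) = ev (e l)" using eprops[OF that] by auto
      show "partial i (partial i (\<lambda>y. \<phi> y l)) x = ev (dr i (dr i (e l))) x"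
        unfolding fe partial_ev[OF ok im] partial_ev[OF okv_dr[OF ok] im] ..
    qed
    then show ?thesis unfolding flat_laplacian_def L_def by simp
  qed
  have en: "flat_energy m N \<phi> x = (\<Sum>l\<le>N. G l)"
  proof -
    have "flat_energy m N \<phi> x = (\<Sum>i\<le>m. \<Sum>l\<le>N. (ev (dr i (e l)) x)\<^sup>2)"
      unfolding flat_energy_def
    proof (intro sum.cong refl)
      fix i l assume "i \<in> {..m}" "l \<in> {..N}"
      then show "(partial i (\<lambda>y. \<phi> y l) x)\<^sup>2 = (ev (dr i (e l)) x)\<^sup>2"
        using eprops[of l] partial_ev[of m "e l" i] by auto
    qed
    also have "\<dots> = (\<Sum>l\<le>N. G l)" unfolding G_def by (rule sum.swap)
    finally show ?thesis .
  qed
  have sq1: "\<forall>y. (\<Sum>j\<le>n1. (ev (E1 j) y)\<^sup>2) = r1\<^sup>2 * (sqnorm m y) ^ k1"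
    using assms(7) E1 unfolding sqnorm_def by simp
  have sq2: "\<forall>y. (\<Sum>j\<le>n2. (ev (E2 j) y)\<^sup>2) = r2\<^sup>2 * (sqnorm m y) ^ k2"
    using assms(8) E2 unfolding sqnorm_def by simp
  have eA: "e l = E1 l" if "l \<le> n1" for l using that unfolding e_def by simp
  have eB: "e (Suc n1 + l) = E2 l" for l unfolding e_def by simp
  have NA: "l \<le> n1 \<Longrightarrow> l \<le> N" for l unfolding N_def by simp
  have NB: "l \<le> n2 \<Longrightarrow> Suc n1 + l \<le> N" for l unfolding N_def by simp
  define A1 where "A1 = (\<Sum>l\<le>n1. f l * L l + G l)"
  define A2 where "A2 = (\<Sum>l\<le>n2. f (Suc n1 + l) * L (Suc n1 + l) + G (Suc n1 + l))"
  define B1 where "B1 = (\<Sum>l\<le>n1. G l)"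
  define B2 where "B2 = (\<Sum>l\<le>n2. G (Suc n1 + l))"
  have A1v: "A1 = real k1 * (2 * real k1 + real m - 1) * r1\<^sup>2"
  proof -
    have "A1 = (\<Sum>j\<le>n1. ev (E1 j) x * (\<Sum>i\<le>m. ev (dr i (dr i (E1 j))) x) + (\<Sum>i\<le>m. (ev (dr i (E1 j)) x)\<^sup>2))"
      unfolding A1_def L_def G_def using fe NA eA by (intro sum.cong) auto
    also have "\<dots> = real k1 * (2 * real k1 + real m - 1) * r1\<^sup>2"
      by (rule block) (use E1 sq1 xs in auto)
    finally show ?thesis .
  qed
  have A2v: "A2 = real k2 * (2 * real k2 + real m - 1) * r2\<^sup>2"
  proof -
    have "A2 = (\<Sum>j\<le>n2. ev (E2 j) x * (\<Sum>i\<le>m. ev (dr i (dr i (E2 j))) x) + (\<Sum>i\<le>m. (ev (dr i (E2 j)) x)\<^sup>2))"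
      unfolding A2_def L_def G_def using fe NB eB by (intro sum.cong) auto
    also have "\<dots> = real k2 * (2 * real k2 + real m - 1) * r2\<^sup>2"
      by (rule block) (use E2 sq2 xs in auto)
    finally show ?thesis .
  qed
  have Q1: "(\<Sum>l\<le>n1. (f l)\<^sup>2) = r1\<^sup>2"
    using assms(7) x1 unfolding sqnorm_def f_def \<phi>_def concat_map_def by simp
  have Q2: "(\<Sum>l\<le>n2. (f (Suc n1 + l))\<^sup>2) = r2\<^sup>2"
    using assms(8) x1 unfolding sqnorm_def f_def \<phi>_def concat_map_def by simp
  define c1 where "c1 = real k1 * (real k1 - 1) + real m * real k1"
  define c2 where "c2 = real k2 * (real k2 - 1) + real m * real k2"
  have S1: "(\<Sum>l\<le>n1. lb_sph m (\<lambda>y. \<phi> y l) x * \<phi> x l) = A1 - B1 - c1 * r1\<^sup>2"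
  proof -
    have "(\<Sum>l\<le>n1. lb_sph m (\<lambda>y. \<phi> y l) x * \<phi> x l) = (\<Sum>l\<le>n1. (f l * L l + G l) - G l - c1 * (f l)\<^sup>2)"
    proof (rule sum.cong[OF refl])
      fix l assume "l \<in> {..n1}" then have "l \<le> n1" by simp
      then show "lb_sph m (\<lambda>y. \<phi> y l) x * \<phi> x l = (f l * L l + G l) - G l - c1 * (f l)\<^sup>2"
      proof -
        have eq: "lb_sph m (\<lambda>y. \<phi> y l) x = L l - c1 * f l"
          using lbl[OF NA[OF \<open>l \<le> n1\<close>]] unfolding c1_def K_def using \<open>l \<le> n1\<close> by simp
        show ?thesis unfolding eq unfolding f_def by (simp add: algebra_simps power2_eq_square)
      qed
    qed
    also have "\<dots> = A1 - B1 - c1 * r1\<^sup>2" unfolding A1_def B1_def Q1[symmetric]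
      by (simp add: sum_subtractf sum_distrib_left sum.distrib)
    finally show ?thesis .
  qed
  have S2: "(\<Sum>l\<le>n2. lb_sph m (\<lambda>y. \<phi> y (Suc n1 + l)) x * \<phi> x (Suc n1 + l)) = A2 - B2 - c2 * r2\<^sup>2"
  proof -
    have "(\<Sum>l\<le>n2. lb_sph m (\<lambda>y. \<phi> y (Suc n1 + l)) x * \<phi> x (Suc n1 + l))
       = (\<Sum>l\<le>n2. (f (Suc n1 + l) * L (Suc n1 + l) + G (Suc n1 + l)) - G (Suc n1 + l) - c2 * (f (Suc n1 + l))\<^sup>2)"
    proof (rule sum.cong[OF refl])
      fix l assume "l \<in> {..n2}" then have "l \<le> n2" by simp
      then show "lb_sph m (\<lambda>y. \<phi> y (Suc n1 + l)) x * \<phi> x (Suc n1 + l)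
         = (f (Suc n1 + l) * L (Suc n1 + l) + G (Suc n1 + l)) - G (Suc n1 + l) - c2 * (f (Suc n1 + l))\<^sup>2"
      proof -
        have eq: "lb_sph m (\<lambda>y. \<phi> y (Suc n1 + l)) x = L (Suc n1 + l) - c2 * f (Suc n1 + l)"
          using lbl[OF NB[OF \<open>l \<le> n2\<close>]] unfolding c2_def K_def using \<open>l \<le> n2\<close> by simp
        show ?thesis unfolding eq unfolding f_def by (simp add: algebra_simps power2_eq_square)
      qed
    qed
    also have "\<dots> = A2 - B2 - c2 * r2\<^sup>2" unfolding A2_def B2_def Q2[symmetric]
      by (simp add: sum_subtractf sum_distrib_left sum.distrib)
    finally show ?thesis .
  qed
  have S: "(\<Sum>l\<le>N. lb_sph m (\<lambda>y. \<phi> y l) x * \<phi> x l) = real k1 ^ 2 * r1\<^sup>2 + real k2 ^ 2 * r2\<^sup>2 - (B1 + B2)"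
    unfolding N_def split_sum S1 S2 A1v A2v c1_def c2_def by (simp add: algebra_simps power2_eq_square)
  have E: "flat_energy m N \<phi> x = B1 + B2" using en unfolding N_def split_sum B1_def B2_def by simp
  have T: "tension m N \<phi> x j = L j - (real (K j) * (real (K j) - 1) + real m * real (K j)) * f j
      - (real k1 ^ 2 * r1\<^sup>2 + real k2 ^ 2 * r2\<^sup>2 - (B1 + B2)) * f j"
    unfolding tension_def using lbl[of j] jN S unfolding N_def f_def by simp
  show "tension m (n1 + n2 + 1) (concat_map n1 F1 F2) x j =
      - flat_laplacian m (\<lambda>y. concat_map n1 F1 F2 y j) x
      + (if j \<le> n1
         then (flat_energy m (n1 + n2 + 1) (concat_map n1 F1 F2) x
                 - (real k1)\<^sup>2 * r1\<^sup>2 - (real k2)\<^sup>2 * r2\<^sup>2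
                 + real k1 * (1 - real m - real k1)) * F1 x j
         else (flat_energy m (n1 + n2 + 1) (concat_map n1 F1 F2) x
                 - (real k1)\<^sup>2 * r1\<^sup>2 - (real k2)\<^sup>2 * r2\<^sup>2
                 + real k2 * (1 - real m - real k2)) * F2 x (j - Suc n1))"
    using T E lap[of j] jN unfolding N_def[symmetric] \<phi>_def[symmetric] f_def K_def
    by (cases "j \<le> n1") (simp_all add: \<phi>_def concat_map_def algebra_simps power2_eq_square)
qed
end
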